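(* Let $(X,T)$ and $(X',T')$ be minimal Cantor systems such that $(X',T')$ is a factor of $(X,T)$. Then $\mathbb P(X',T')\subseteq\mathbb P(X,T)$.
   Context: A minimal Cantor system is a pair $(X,T)$ where $X$ is a Cantor space, $T:X\to X$ a homeomorphism, and every orbit is dense. $(X',T')$ is a factor of $(X,T)$ if there is a continuous onto $\pi:X\to X'$ with $\pi\circ T=T'\circ\pi$. For $x\in X$, clopen $U$ and $p\ge1$, $\mathrm{PS}_p(x,U)=\{k\in\mathbb Z : T^{k+np}x\in U\ \forall n\in\mathbb Z\}$. An integer $p$ is an essential period of $x$ for $U$ if $\mathrm{PS}_p(x,U)\neq\emptyset$ and $p$ divides every $q\in\mathbb Z$ satisfying $\mathrm{PS}_p(x,U)=\mathrm{PS}_p(x,U)-q$. $\mathbb P(X,T)=\{p\geq 2 : p \text{ is an essential period of some } x\in X \text{ for some clopen } U\}$. *)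

theory Defs
  imports "HOL-Analysis.Analysis"
begin

definition cantor_space :: "'a::metric_space set \<Rightarrow> bool" where
  "cantor_space X \<longleftrightarrow> X \<noteq> {} \<and> compact X
     \<and> (\<forall>x\<in>X. x islimpt X)
     \<and> (\<forall>x\<in>X. connected_component_set X x = {x})"

definition tpow :: "'a set \<Rightarrow> ('a \<Rightarrow> 'a) \<Rightarrow> int \<Rightarrow> 'a \<Rightarrow> 'a" where
  "tpow X T k = (if k \<ge> 0 then T ^^ nat k else inv_into X T ^^ nat (- k))"

definition minimal_cantor_system :: "'a::metric_space set \<Rightarrow> ('a \<Rightarrow> 'a) \<Rightarrow> bool" where
  "minimal_cantor_system X T \<longleftrightarrow> cantor_space X
     \<and> (\<exists>S. homeomorphism X X T S)
     \<and> (\<forall>x\<in>X. X \<subseteq> closure {tpow X T k x | k. True})"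

definition is_factor ::
  "'b::metric_space set \<Rightarrow> ('b \<Rightarrow> 'b) \<Rightarrow> 'a::metric_space set \<Rightarrow> ('a \<Rightarrow> 'a) \<Rightarrow> bool" where
  "is_factor X' T' X T \<longleftrightarrow> (\<exists>\<pi>. continuous_on X \<pi> \<and> \<pi> ` X = X'
     \<and> (\<forall>x\<in>X. \<pi> (T x) = T' (\<pi> x)))"

definition clopen_in :: "'a::topological_space set \<Rightarrow> 'a set \<Rightarrow> bool" where
  "clopen_in X U \<longleftrightarrow> openin (top_of_set X) U \<and> closedin (top_of_set X) U"

definition PS :: "'a set \<Rightarrow> ('a \<Rightarrow> 'a) \<Rightarrow> int \<Rightarrow> 'a \<Rightarrow> 'a set \<Rightarrow> int set" where
  "PS X T p x U = {k. \<forall>n::int. tpow X T (k + n * p) x \<in> U}"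

definition essential_period :: "'a set \<Rightarrow> ('a \<Rightarrow> 'a) \<Rightarrow> int \<Rightarrow> 'a \<Rightarrow> 'a set \<Rightarrow> bool" where
  "essential_period X T p x U \<longleftrightarrow> p \<ge> 1 \<and> PS X T p x U \<noteq> {}
     \<and> (\<forall>q::int. PS X T p x U = (\<lambda>k. k - q) ` PS X T p x U \<longrightarrow> p dvd q)"

definition periods :: "'a::metric_space set \<Rightarrow> ('a \<Rightarrow> 'a) \<Rightarrow> int set" where
  "periods X T = {p. p \<ge> 2 \<and> (\<exists>x\<in>X. \<exists>U. clopen_in X U \<and> essential_period X T p x U)}"

end

theory Submission
  imports Defs
begin

lemma hom_facts:
  assumes "homeomorphism X X T S"
  shows "T ` X = X" "inj_on T X"
  using assms unfolding homeomorphism_def by (auto intro: inj_on_inverseI)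

lemma tpow_conj:
  fixes X :: "'a set" and X' :: "'b set"
  assumes hX: "T ` X = X" "inj_on T X" and hX': "T' ` X' = X'" "inj_on T' X'"
    and pimg: "\<pi> ` X = X'" and comm: "\<forall>x\<in>X. \<pi> (T x) = T' (\<pi> x)"
    and x: "x \<in> X"
  shows "tpow X T k x \<in> X \<and> \<pi> (tpow X T k x) = tpow X' T' k (\<pi> x)"
proof -
  have pos: "(T ^^ n) x \<in> X \<and> \<pi> ((T ^^ n) x) = (T' ^^ n) (\<pi> x)" for n
  proof (induction n)
    case 0 then show ?case using x by simp
  next
    case (Suc n) then show ?case using hX comm by auto
  qed
  have neg: "(inv_into X T ^^ n) x \<in> X \<and> \<pi> ((inv_into X T ^^ n) x) = (inv_into X' T' ^^ n) (\<pi> x)" for n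
  proof (induction n)
    case 0 then show ?case using x by simp
  next
    case (Suc n)
    define w where "w = (inv_into X T ^^ n) x"
    have w: "w \<in> X" "\<pi> w = (inv_into X' T' ^^ n) (\<pi> x)" using Suc w_def by auto
    define z where "z = inv_into X T w"
    have z: "z \<in> X" "T z = w" using w hX unfolding z_def
      by (metis inv_into_into, metis f_inv_into_f)
    have "\<pi> w = T' (\<pi> z)" using comm z by auto
    moreover have "\<pi> z \<in> X'" using z pimg by auto
    ultimately have "inv_into X' T' (\<pi> w) = \<pi> z" using hX' inv_into_f_f by metis
    then show ?case using z w unfolding z_def w_def by simp
  qed
  show ?thesis unfolding tpow_def using pos neg by auto
qed

theorem mainTheorem4:
  fixes X :: "'a::metric_space set" and T :: "'a \<Rightarrow> 'a"
    and X' :: "'b::metric_space set" and T' :: "'b \<Rightarrow> 'b"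
  assumes "minimal_cantor_system X T" and "minimal_cantor_system X' T'"
    and "is_factor X' T' X T"
  shows "periods X' T' \<subseteq> periods X T"
proof
  fix p assume "p \<in> periods X' T'"
  then obtain x' U' where p2: "p \<ge> 2" and x': "x' \<in> X'" and cl: "clopen_in X' U'"
    and ess: "essential_period X' T' p x' U'" unfolding periods_def by blast
  obtain S where "homeomorphism X X T S" using assms(1) unfolding minimal_cantor_system_def by blast
  note hX = hom_facts[OF this]
  obtain S' where "homeomorphism X' X' T' S'" using assms(2) unfolding minimal_cantor_system_def by blast
  note hX' = hom_facts[OF this]
  obtain \<pi> where cont: "continuous_on X \<pi>" and pimg: "\<pi> ` X = X'"
    and comm: "\<forall>x\<in>X. \<pi> (T x) = T' (\<pi> x)" using assms(3) unfolding is_factor_def by blast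
  obtain x where x: "x \<in> X" "\<pi> x = x'" using x' pimg by blast
  define U where "U = X \<inter> \<pi> -` U'"
  have pfun: "\<pi> \<in> X \<rightarrow> X'" using pimg by blast
  have clU: "clopen_in X U" using cl unfolding clopen_in_def U_def
    using continuous_openin_preimage[OF cont pfun] continuous_closedin_preimage_gen[OF cont pfun]
    by blast
  have eqv: "tpow X T k x \<in> U \<longleftrightarrow> tpow X' T' k x' \<in> U'" for k
    using tpow_conj[OF hX hX' pimg comm x(1), of k] x(2) unfolding U_def by auto
  have "PS X T p x U = PS X' T' p x' U'" unfolding PS_def using eqv by simp
  then have "essential_period X T p x U" using ess unfolding essential_period_def by simp
  then show "p \<in> periods X T" unfolding periods_def using p2 x(1) clU by blast
qed

end
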